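(* Let $F=\{\mathbb{R}^{n};f_{1},\dots,f_{m}\}$ be an IFS of contractive similitudes (at least two distinct maps) that obeys the open set condition, with contraction factors $\lambda_i=s^{a_i}$ where $s=\max_i\lambda_i$, and take costs $c_{l}=a_{l}$ for all $l\in\{1,\dots,m\}$. Let $\mathbf{i},\mathbf{j}\in\Sigma^{\infty}$ and $p,q\in\mathbb{N}$ be such that $\sigma^{p}\mathbf{i}=\sigma^{q}\mathbf{j}$ and $c(\mathbf{i}|p)=c(\mathbf{j}|q)$. Then for every closed $T\subset\mathbb{R}^n$, \[ \Pi_{T}(\mathbf{i})=E\,\Pi_{T}(\mathbf{j}),\qquad E=f_{i_{1}}^{-1}\circ\cdots\circ f_{i_{p}}^{-1}\circ f_{j_{q}}\circ\cdots\circ f_{j_{1}}. \]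
   Context: An IFS $F$ consists of maps $f_{i}:\mathbb{R}^{n}\to\mathbb{R}^{n}$ with $|f_{i}(x)-f_{i}(y)|=\lambda_{i}|x-y|$, $\lambda_{i}\in(0,1)$. $F$ obeys the open set condition if there is a nonempty open $O$ with $f_i(O)\subset O$ for all $i$ and $f_{i}(O)\cap f_{j}(O)=\emptyset$ for $i\neq j$. Let $\Sigma=\{1,\dots,m\}$, $\Sigma^{\infty}$ the infinite sequences over $\Sigma$, and $\sigma:\Sigma^\infty\to\Sigma^\infty$ the shift $\sigma(i_1i_2i_3\dots)=i_2i_3\dots$. For $\mathbf{i}\in\Sigma^{\infty}$: $\mathbf{i}|k=i_{1}\dots i_{k}$, $\mathbf{i}|0=\emptyset$, $f_{(\mathbf{j}|l)}=f_{j_{1}}\circ\cdots\circ f_{j_{l}}$, $f_{-(\mathbf{i}|k)}=f_{i_{1}}^{-1}\circ\cdots\circ f_{i_{k}}^{-1}$, $c(\mathbf{i}|k)=c_{i_{1}}+\cdots+c_{i_{k}}$, $c(\emptyset)=0$; \[ \Pi_{T}(\mathbf{i}|k)=f_{-(\mathbf{i}|k)}\big(\{f_{(\mathbf{j}|l)}(T):\mathbf{j}\in\Sigma^{\infty},\ l\in\mathbb{N},\ c(\mathbf{j}|l-1)\leq c(\mathbf{i}|k)<c(\mathbf{j}|l)\}\big),\quad \Pi_{T}(\mathbf{i})=\bigcup_{k\geq1}\Pi_{T}(\mathbf{i}|k). \] A map applied to a collection of sets is applied to each member. *)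

theory Defs
  imports "HOL-Analysis.Analysis"
begin

text \<open>Infinite sequences over the alphabet {1..m} are functions nat => nat;
  the letter i_k (k >= 1) of a sequence w is w (k - 1).\<close>

definition seqs :: "nat \<Rightarrow> (nat \<Rightarrow> nat) set" where
  "seqs m = {w. \<forall>k. w k \<in> {1..m}}"

definition trunc :: "(nat \<Rightarrow> nat) \<Rightarrow> nat \<Rightarrow> nat list" where
  "trunc w k = map w [0..<k]"

definition shift_pow :: "nat \<Rightarrow> (nat \<Rightarrow> nat) \<Rightarrow> (nat \<Rightarrow> nat)" where
  "shift_pow p w = (\<lambda>k. w (k + p))"

fun wcomp :: "(nat \<Rightarrow> 'a \<Rightarrow> 'a) \<Rightarrow> nat list \<Rightarrow> 'a \<Rightarrow> 'a" where
  "wcomp f [] = id"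
| "wcomp f (a # u) = f a \<circ> wcomp f u"

fun winvcomp :: "(nat \<Rightarrow> 'a \<Rightarrow> 'a) \<Rightarrow> nat list \<Rightarrow> 'a \<Rightarrow> 'a" where
  "winvcomp f [] = id"
| "winvcomp f (a # u) = inv (f a) \<circ> winvcomp f u"

definition wcost :: "(nat \<Rightarrow> real) \<Rightarrow> nat list \<Rightarrow> real" where
  "wcost c u = sum_list (map c u)"

definition tiles_at :: "nat \<Rightarrow> (nat \<Rightarrow> 'a \<Rightarrow> 'a) \<Rightarrow> (nat \<Rightarrow> real) \<Rightarrow> 'a set \<Rightarrow> real \<Rightarrow> 'a set set" where
  "tiles_at m f c T t =
     {wcomp f (trunc j l) ` T | j l. j \<in> seqs m \<and> l \<ge> 1 \<and>
        wcost c (trunc j (l - 1)) \<le> t \<and> t < wcost c (trunc j l)}"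

definition PiT_word :: "nat \<Rightarrow> (nat \<Rightarrow> 'a \<Rightarrow> 'a) \<Rightarrow> (nat \<Rightarrow> real) \<Rightarrow> 'a set \<Rightarrow> (nat \<Rightarrow> nat) \<Rightarrow> nat \<Rightarrow> 'a set set" where
  "PiT_word m f c T w k =
     (\<lambda>A. winvcomp f (trunc w k) ` A) ` tiles_at m f c T (wcost c (trunc w k))"

definition PiT :: "nat \<Rightarrow> (nat \<Rightarrow> 'a \<Rightarrow> 'a) \<Rightarrow> (nat \<Rightarrow> real) \<Rightarrow> 'a set \<Rightarrow> (nat \<Rightarrow> nat) \<Rightarrow> 'a set set" where
  "PiT m f c T w = (\<Union>k\<in>{1..}. PiT_word m f c T w k)"

end

theory Submission imports Defs "HOL-Analysis.Analysis" begin
lemma sim_surj: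
  fixes f :: "'a::euclidean_space \<Rightarrow> 'a"
  assumes lp: "0 < l" and d: "\<And>x y. dist (f x) (f y) = l * dist x y"
  shows "surj f"
proof -
  have cont: "continuous_on UNIV f"
    unfolding continuous_on_iff
  proof (intro ballI allI impI)
    fix x and e :: real assume "e > 0"
    then show "\<exists>d>0. \<forall>x'\<in>UNIV. dist x' x < d \<longrightarrow> dist (f x') (f x) < e"
      using lp by (intro exI[of _ "e / l"]) (auto simp: d field_simps)
  qed
  have inj: "inj f" unfolding inj_on_def proof (intro ballI impI) fix x y assume "f x = f y" then have "l * dist x y = 0" using d by (metis dist_self) then show "x = y" using lp by simp qed
  have op: "open (range f)" by (rule invariance_of_domain[OF cont open_UNIV]) (use inj in auto)
  have "complete (range f)"
    unfolding complete_def
  proof (intro allI impI, elim conjE)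
    fix g assume g: "\<forall>n. g n \<in> range f" and cg: "Cauchy g"
    have "\<forall>n. \<exists>y. g n = f y" using g by auto
    then obtain x where x: "\<And>n. g n = f (x n)" by metis
    have "Cauchy x"
      unfolding Cauchy_def
    proof (intro allI impI)
      fix e :: real assume "e > 0"
      then obtain M where M: "\<forall>m\<ge>M. \<forall>n\<ge>M. dist (g m) (g n) < l * e"
        using cg lp unfolding Cauchy_def by (meson mult_pos_pos)
      show "\<exists>M. \<forall>m\<ge>M. \<forall>n\<ge>M. dist (x m) (x n) < e"
        using M lp by (intro exI[of _ M]) (auto simp: x d)
    qed
    then obtain y where "x \<longlonglongrightarrow> y" using Cauchy_convergent_iff convergent_def by blast
    then have "(\<lambda>n. f (x n)) \<longlonglongrightarrow> f y"
      using cont continuous_on_tendsto_compose by (metis UNIV_I eventually_sequentially)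
    moreover have "g = (\<lambda>n. f (x n))" using x by auto
    ultimately show "\<exists>z\<in>range f. g \<longlonglongrightarrow> z" by auto
  qed
  then have "closed (range f)" by (rule complete_imp_closed)
  then show ?thesis using op clopen by blast
qed

lemma winvcomp_append: "winvcomp f (u @ v) = winvcomp f u \<circ> winvcomp f v"
  by (induction u) (auto simp: comp_assoc)

lemma wcomp_append: "wcomp f (u @ v) = wcomp f u \<circ> wcomp f v"
  by (induction u) (auto simp: comp_assoc)

lemma wcomp_rev_winv:
  assumes "\<forall>a\<in>set u. f a \<circ> inv (f a) = id"
  shows "wcomp f (rev u) \<circ> winvcomp f u = id"
  using assms
proof (induction u)
  case Nil then show ?case by simp
next
  case (Cons a u)
  have "wcomp f (rev (a # u)) \<circ> winvcomp f (a # u)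
      = wcomp f (rev u) \<circ> (f a \<circ> inv (f a)) \<circ> winvcomp f u"
    by (simp add: wcomp_append comp_assoc)
  also have "\<dots> = id" using Cons by (simp add: fun_eq_iff)
  finally show ?case .
qed

lemma trunc_Suc: "trunc w (Suc k) = trunc w k @ [w k]"
  unfolding trunc_def by simp

lemma trunc_0: "trunc w 0 = []"
  unfolding trunc_def by simp

lemma trunc_add: "trunc w (k + r) = trunc w k @ trunc (shift_pow k w) r"
  by (induction r) (simp_all add: trunc_Suc trunc_0 shift_pow_def add.commute)

lemma wcost_append: "wcost c (u @ v) = wcost c u + wcost c v"
  unfolding wcost_def by simp

lemma trunc_set: "w \<in> seqs m \<Longrightarrow> set (trunc w k) \<subseteq> {1..m}"
  unfolding trunc_def seqs_def by auto

lemma trunc_cons: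
  "trunc (\<lambda>k. if k = 0 then a else j (k - 1)) (Suc n) = a # trunc j n"
  unfolding trunc_def by (simp add: upt_conv_Cons map_Suc_upt[symmetric] del: upt_Suc)

lemma tiles_mono:
  assumes "a \<in> {1..m}"
  shows "(\<lambda>A. f a ` A) ` tiles_at m f c T t \<subseteq> tiles_at m f c T (t + c a)"
proof
  fix B assume "B \<in> (\<lambda>A. f a ` A) ` tiles_at m f c T t"
  then obtain j l where j: "j \<in> seqs m" "l \<ge> 1" "wcost c (trunc j (l - 1)) \<le> t"
    "t < wcost c (trunc j l)" and B: "B = f a ` (wcomp f (trunc j l) ` T)"
    unfolding tiles_at_def by auto
  define j' where "j' = (\<lambda>k. if k = 0 then a else j (k - 1))"
  have j': "j' \<in> seqs m" using j(1) assms unfolding seqs_def j'_def by auto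
  have e1: "trunc j' (Suc l) = a # trunc j l" unfolding j'_def by (rule trunc_cons)
  have e2: "trunc j' (Suc l - 1) = a # trunc j (l - 1)"
    using trunc_cons[of a j "l - 1"] j(2) unfolding j'_def by simp
  have "B = wcomp f (trunc j' (Suc l)) ` T" using B e1 by (simp add: image_comp)
  moreover have "wcost c (trunc j' (Suc l - 1)) \<le> t + c a"
    using e2 j(3) by (simp add: wcost_def)
  moreover have "t + c a < wcost c (trunc j' (Suc l))"
    using e1 j(4) by (simp add: wcost_def)
  ultimately show "B \<in> tiles_at m f c T (t + c a)"
    unfolding tiles_at_def mem_Collect_eq
    apply (rule_tac x=j' in exI)
    apply (rule_tac x="Suc l" in exI)
    using j' by simp
qed

lemma PiT_word_Suc:
  assumes w: "w \<in> seqs m" and inj: "\<forall>l\<in>{1..m}. inj (f l)"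
  shows "PiT_word m f c T w k \<subseteq> PiT_word m f c T w (Suc k)"
proof
  fix X assume "X \<in> PiT_word m f c T w k"
  then obtain A where A: "A \<in> tiles_at m f c T (wcost c (trunc w k))"
    and X: "X = winvcomp f (trunc w k) ` A"
    unfolding PiT_word_def by auto
  have a: "w k \<in> {1..m}" using w unfolding seqs_def by auto
  have "f (w k) ` A \<in> tiles_at m f c T (wcost c (trunc w k) + c (w k))"
    using tiles_mono[OF a] A by blast
  then have A': "f (w k) ` A \<in> tiles_at m f c T (wcost c (trunc w (Suc k)))"
    by (simp add: trunc_Suc wcost_append wcost_def)
  have "winvcomp f (trunc w (Suc k)) ` (f (w k) ` A) = winvcomp f (trunc w k) ` (inv (f (w k)) ` f (w k) ` A)"
    by (simp add: trunc_Suc winvcomp_append image_comp)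
  also have "\<dots> = X" using inj[rule_format, OF a] X by (simp add: image_comp)
  finally show "X \<in> PiT_word m f c T w (Suc k)"
    unfolding PiT_word_def using A' by (metis image_eqI)
qed

lemma PiT_word_mono:
  assumes w: "w \<in> seqs m" and inj: "\<forall>l\<in>{1..m}. inj (f l)" and "k \<le> k'"
  shows "PiT_word m f c T w k \<subseteq> PiT_word m f c T w k'"
  using assms(3)
proof (induction k' rule: dec_induct)
  case base then show ?case by simp
next
  case (step n) then show ?case using PiT_word_Suc[OF w inj] by blast
qed

theorem theorem2:
  fixes m :: nat
    and f :: "nat \<Rightarrow> real ^ 'n \<Rightarrow> real ^ 'n"
    and lam :: "nat \<Rightarrow> real"
    and a :: "nat \<Rightarrow> real"
    and s :: real
    and c :: "nat \<Rightarrow> real"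
    and i j :: "nat \<Rightarrow> nat"
    and p q :: nat
    and T :: "(real ^ 'n) set"
  assumes m2: "m \<ge> 2"
    and sim: "\<And>l x y. l \<in> {1..m} \<Longrightarrow> dist (f l x) (f l y) = lam l * dist x y"
    and lam_range: "\<And>l. l \<in> {1..m} \<Longrightarrow> 0 < lam l \<and> lam l < 1"
    and osc: "\<exists>U. open U \<and> U \<noteq> {} \<and> (\<forall>l\<in>{1..m}. f l ` U \<subseteq> U) \<and>
               (\<forall>l\<in>{1..m}. \<forall>l'\<in>{1..m}. l \<noteq> l' \<longrightarrow> f l ` U \<inter> f l' ` U = {})"
    and s_def: "s = Max (lam ` {1..m})"
    and lam_pow: "\<And>l. l \<in> {1..m} \<Longrightarrow> lam l = s powr a l"
    and cost: "\<And>l. l \<in> {1..m} \<Longrightarrow> c l = a l"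
    and i_seq: "i \<in> seqs m"
    and j_seq: "j \<in> seqs m"
    and shift_eq: "shift_pow p i = shift_pow q j"
    and cost_eq: "wcost c (trunc i p) = wcost c (trunc j q)"
    and T_closed: "closed T"
  shows "PiT m f c T i =
         (\<lambda>A. (winvcomp f (trunc i p) \<circ> wcomp f (rev (trunc j q))) ` A) ` PiT m f c T j"
proof -
  have lampos: "\<And>l. l \<in> {1..m} \<Longrightarrow> 0 < lam l" using lam_range by blast
  have inj: "\<And>l. l \<in> {1..m} \<Longrightarrow> inj (f l)"
  proof -
    fix l assume l: "l \<in> {1..m}"
    show "inj (f l)" unfolding inj_on_def
    proof (intro ballI impI)
      fix x y assume "f l x = f l y"
      then have "lam l * dist x y = 0" using sim[OF l] by (metis dist_self)
      then show "x = y" using lampos[OF l] by simp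
    qed
  qed
  have injall: "\<forall>l\<in>{1..m}. inj (f l)" using inj by blast
  have surj: "\<And>l. l \<in> {1..m} \<Longrightarrow> surj (f l)"
    using sim_surj lampos sim by blast
  define E where "E = winvcomp f (trunc i p) \<circ> wcomp f (rev (trunc j q))"
  have key: "PiT_word m f c T i (p + r) = (\<lambda>A. E ` A) ` PiT_word m f c T j (q + r)" for r
  proof -
    have sh: "shift_pow q j = shift_pow p i" using shift_eq by simp
    have id1: "\<forall>a\<in>set (trunc j q). f a \<circ> inv (f a) = id"
      using trunc_set[OF j_seq, of q] surj by (auto simp: surj_iff)
    have "E \<circ> winvcomp f (trunc j (q + r))
        = winvcomp f (trunc i p) \<circ> (wcomp f (rev (trunc j q)) \<circ> winvcomp f (trunc j q))
          \<circ> winvcomp f (trunc (shift_pow q j) r)"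
      unfolding E_def by (simp add: trunc_add winvcomp_append comp_assoc)
    also have "\<dots> = winvcomp f (trunc i (p + r))"
      using wcomp_rev_winv[OF id1] sh by (simp add: trunc_add winvcomp_append)
    finally have c1: "E \<circ> winvcomp f (trunc j (q + r)) = winvcomp f (trunc i (p + r))" .
    have c2: "wcost c (trunc j (q + r)) = wcost c (trunc i (p + r))"
      using cost_eq sh by (simp add: trunc_add wcost_append)
    show ?thesis unfolding PiT_word_def image_comp
      by (simp add: c1[symmetric] c2 image_comp comp_def)
  qed
  have "PiT m f c T i \<subseteq> (\<lambda>A. E ` A) ` PiT m f c T j"
  proof
    fix X assume "X \<in> PiT m f c T i"
    then obtain k where k: "k \<ge> 1" "X \<in> PiT_word m f c T i k" unfolding PiT_def by auto
    then have "X \<in> PiT_word m f c T i (p + k)"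
      using PiT_word_mono[where k=k and k'="p + k", OF i_seq injall] by auto
    then have "X \<in> (\<lambda>A. E ` A) ` PiT_word m f c T j (q + k)" using key by simp
    moreover have "PiT_word m f c T j (q + k) \<subseteq> PiT m f c T j" using k(1)
      unfolding PiT_def by (intro UN_upper) auto
    ultimately show "X \<in> (\<lambda>A. E ` A) ` PiT m f c T j" by blast
  qed
  moreover have "(\<lambda>A. E ` A) ` PiT m f c T j \<subseteq> PiT m f c T i"
  proof
    fix X assume "X \<in> (\<lambda>A. E ` A) ` PiT m f c T j"
    then obtain k where k: "k \<ge> 1" "X \<in> (\<lambda>A. E ` A) ` PiT_word m f c T j k"
      unfolding PiT_def by auto
    then have "X \<in> (\<lambda>A. E ` A) ` PiT_word m f c T j (q + k)"
      using PiT_word_mono[where k=k and k'="q + k", OF j_seq injall] by auto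
    then have "X \<in> PiT_word m f c T i (p + k)" using key by simp
    then show "X \<in> PiT m f c T i" using k(1) unfolding PiT_def by auto
  qed
  ultimately show ?thesis unfolding E_def by blast
qed

end
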